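(* There exists $k_0$ such that for all integers $k\ge k_0$, all positive integers $N\ge k4^k$, all $\delta\in(0,2^{-k}/20]$ and all $x\in\left[4^{k^2},N^k/(k-1)!\right]$, \[ \#\mathcal{S}_1(N,\delta,x)\ge\frac{x^{1/k}}{200}. \]
   Context: For $y\in\mathbb{R}$, $\|y\|$ denotes the distance from $y$ to the nearest integer. For a positive integer $N$ and real $\delta,x\ge0$, $\mathcal{S}_1(N,\delta,x):=\{n\in\{1,\dots,N\} : \|x/n\|\ge\delta\}$. *)

theory Defs
  imports "HOL-Analysis.Analysis"
begin

definition dist_nearest_int :: "real \<Rightarrow> real" where
  "dist_nearest_int y = \<bar>y - of_int (round y)\<bar>"

definition S1 :: "nat \<Rightarrow> real \<Rightarrow> real \<Rightarrow> nat set" where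
  "S1 N \<delta> x = {n \<in> {1..N}. dist_nearest_int (x / real n) \<ge> \<delta>}"

end

theory Submission
  imports Defs
begin

lemma dni_le: assumes "z \<in> \<int>" shows "dist_nearest_int t \<le> \<bar>t - z\<bar>"
proof -
  obtain m where "z = of_int m" using assms Ints_cases by blast
  thus ?thesis unfolding dist_nearest_int_def using round_diff_minimal by simp
qed

fun fdiff :: "nat \<Rightarrow> (nat \<Rightarrow> real) \<Rightarrow> nat \<Rightarrow> real" where
  "fdiff 0 f n = f n"
| "fdiff (Suc m) f n = fdiff m f n - fdiff m f (Suc n)"

lemma fdiff_add: "fdiff m (\<lambda>j. f j + h j) n = fdiff m f n + fdiff m h n"
  by (induction m arbitrary: n) auto

lemma fdiff_Ints: "(\<And>j. f j \<in> \<int>) \<Longrightarrow> fdiff m f n \<in> \<int>"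
  by (induction m arbitrary: n) auto

lemma fdiff_bound:
  assumes "\<And>j. n \<le> j \<Longrightarrow> j \<le> n + m \<Longrightarrow> \<bar>e j\<bar> \<le> B"
  shows "\<bar>fdiff m e n\<bar> \<le> 2 ^ m * B"
  using assms
proof (induction m arbitrary: n)
  case 0
  then show ?case by auto
next
  case (Suc m)
  have a: "\<bar>fdiff m e n\<bar> \<le> 2 ^ m * B" using Suc.IH[of n] Suc.prems by auto
  have b: "\<bar>fdiff m e (Suc n)\<bar> \<le> 2 ^ m * B" using Suc.IH[of "Suc n"] Suc.prems by auto
  show ?case using a b by simp
qed

lemma fdiff_closed:
  assumes "n \<ge> 1"
  shows "fdiff m (\<lambda>j. x / real j) n = fact m * x / (\<Prod>i\<le>m. real (n + i))"
  using assms
proof (induction m arbitrary: n)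
  case 0
  then show ?case by simp
next
  case (Suc m)
  define P where "P = (\<lambda>n. \<Prod>i\<le>m. real (n + i))"
  have P1: "(\<Prod>i\<le>Suc m. real (n + i)) = P n * real (n + Suc m)"
    unfolding P_def by (simp add: prod.atMost_Suc)
  have P2: "(\<Prod>i\<le>Suc m. real (n + i)) = real n * P (Suc n)"
    unfolding P_def by (subst prod.atMost_Suc_shift) simp
  have pos: "P n > 0" "P (Suc n) > 0" using Suc.prems unfolding P_def
    by (auto intro!: prod_pos)
  define Q where "Q = (\<Prod>i\<le>Suc m. real (n + i))"
  have Qpos: "Q > 0" using pos P1 Q_def Suc.prems by simp
  have Q1: "Q = P n * real (n + Suc m)" using P1 Q_def by simp
  have Q2: "Q = real n * P (Suc n)" using P2 Q_def by simp
  have r1: "real (n + Suc m) > 0" by simp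
  have r2: "real n > 0" using Suc.prems by simp
  have e1: "fact m * x / P n = fact m * x * real (n + Suc m) / Q"
    unfolding Q1 using r1 by (simp add: nonzero_mult_divide_mult_cancel_right)
  have e2: "fact m * x / P (Suc n) = fact m * x * real n / Q"
    unfolding Q2 using r2 by (simp add: nonzero_mult_divide_mult_cancel_left mult.commute)
  have "fdiff (Suc m) (\<lambda>j. x / real j) n = fact m * x / P n - fact m * x / P (Suc n)"
    using Suc by (simp add: P_def)
  also have "\<dots> = fact m * x * (real (n + Suc m) - real n) / Q"
    unfolding e1 e2 by (simp add: diff_divide_distrib[symmetric] right_diff_distrib[symmetric])
  also have "\<dots> = fact (Suc m) * x / (\<Prod>i\<le>Suc m. real (n + i))"
    by (simp add: algebra_simps Q_def)
  finally show ?case .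
qed

lemma card_spread:
  fixes S :: "nat set"
  assumes "finite S" "L > 0" "\<And>u v. u \<in> S \<Longrightarrow> v \<in> S \<Longrightarrow> u < v \<Longrightarrow> real (v - u) < L"
  shows "real (card S) \<le> L + 1"
proof (cases "S = {}")
  case True
  then show ?thesis using assms by simp
next
  case False
  define s where "s = Min S"
  have sS: "s \<in> S" using False assms(1) s_def by simp
  have "S \<subseteq> {s..s + nat \<lfloor>L\<rfloor>}"
  proof
    fix v assume v: "v \<in> S"
    have "s \<le> v" using v assms(1) s_def by simp
    moreover have "v - s \<le> nat \<lfloor>L\<rfloor>"
    proof (cases "s < v")
      case True
      then have "real (v - s) < L" using assms(3) sS v by blast
      then show ?thesis by linarith
    qed simp
    ultimately show "v \<in> {s..s + nat \<lfloor>L\<rfloor>}" by simp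
  qed
  then have "card S \<le> nat \<lfloor>L\<rfloor> + 1" using card_mono[of "{s..s + nat \<lfloor>L\<rfloor>}" S] by simp
  then show ?thesis using assms(2) by linarith
qed

lemma harm_le_ln: "n \<ge> 1 \<Longrightarrow> (\<Sum>m=1..n. 1 / real m) \<le> 1 + ln (real n)"
proof (induction n rule: dec_induct)
  case base
  then show ?case by simp
next
  case (step n)
  have "ln (real n / real (Suc n)) \<le> real n / real (Suc n) - 1"
    using step by (intro ln_le_minus_one) auto
  then have "1 / real (Suc n) \<le> ln (real (Suc n)) - ln (real n)"
    using step by (simp add: ln_div field_simps)
  then show ?case using step by simp
qed

lemma fact_lower: "real k ^ k \<le> exp (real k) * fact k"
proof -
  have sm: "(\<lambda>n. real k ^ n / fact n) sums exp (real k)"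
    using exp_converges[of "real k"] by (simp add: divide_inverse mult.commute)
  have "sum (\<lambda>n. real k ^ n / fact n) {k} \<le> exp (real k)"
    using sum_le_suminf[OF sums_summable[OF sm], of "{k}"] sums_unique[OF sm] by auto
  then have "real k ^ k / fact k \<le> exp (real k)" by simp
  then show ?thesis by (simp add: field_simps)
qed

lemma Q_ratio:
  fixes n n' k :: nat
  assumes "n < n'"
  shows "(\<Prod>i<k. real (n + i)) * (1 + real k * (real (n' - n) / real (n + k)))
         \<le> (\<Prod>i<k. real (n' + i))"
proof (cases "n + k = 0")
  case True then show ?thesis by simp
next
  case False
  define c where "c = 1 + real (n' - n) / real (n + k)"
  have c0: "c \<ge> 0" unfolding c_def by simp
  have "1 + real k * (real (n' - n) / real (n + k)) \<le> c ^ k"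
    unfolding c_def by (rule Bernoulli_inequality) (rule order_trans[of _ 0]; simp)
  then have "(\<Prod>i<k. real (n + i)) * (1 + real k * (real (n' - n) / real (n + k)))
      \<le> (\<Prod>i<k. real (n + i)) * c ^ k"
    by (intro mult_left_mono) (auto intro: prod_nonneg)
  also have "\<dots> = (\<Prod>i<k. real (n + i) * c)" by (simp add: prod.distrib)
  also have "\<dots> \<le> (\<Prod>i<k. real (n' + i))"
  proof (rule prod_mono)
    fix i assume i: "i \<in> {..<k}"
    have "real (n + i) * c = real (n + i) + real (n' - n) * (real (n + i) / real (n + k))"
      unfolding c_def using False by (simp add: field_simps)
    also have "\<dots> \<le> real (n + i) + real (n' - n) * 1"
      using i False by (intro add_left_mono mult_left_mono) auto
    also have "\<dots> = real (n' + i)" using assms by simp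
    finally show "0 \<le> real (n + i) * c \<and> real (n + i) * c \<le> real (n' + i)"
      using c0 by simp
  qed
  finally show ?thesis .
qed

lemma pow2_big: "k \<ge> 20 \<Longrightarrow> 100 * (real k + 1) \<le> 2 ^ k"
proof (induction k rule: dec_induct)
  case base
  then show ?case by simp
next
  case (step n)
  then show ?case by simp
qed

lemma fact_root:
  assumes "k \<ge> 1"
  shows "real k / 50 \<le> root k (fact (k - 1))"
proof -
  obtain k' where k': "k = Suc k'" using assms by (cases k) auto
  have e: "exp (real k) \<le> 3 ^ k"
    using exp_le power_mono[OF exp_le, of k] by (simp add: exp_of_nat_mult[symmetric])
  have kk: "real k \<le> 2 ^ k"
  proof (induction k)
    case (Suc k) then show ?case using one_le_power[of "2::real" k] by (simp only: of_nat_Suc power_Suc) linarith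
  qed simp
  have "real k ^ k \<le> exp (real k) * fact k" by (rule fact_lower)
  also have "\<dots> = exp (real k) * real k * fact (k - 1)" using k' by simp
  also have "\<dots> \<le> 3 ^ k * 2 ^ k * fact (k - 1)"
    using e kk by (intro mult_right_mono mult_mono) auto
  also have "\<dots> \<le> 50 ^ k * fact (k - 1)"
  proof -
    have "(3::real) ^ k * 2 ^ k = 6 ^ k" by (simp add: power_mult_distrib[symmetric])
    also have "\<dots> \<le> 50 ^ k" by (intro power_mono) auto
    finally show ?thesis by (intro mult_right_mono) auto
  qed
  finally have "(real k / 50) ^ k \<le> fact (k - 1)" by (simp add: power_divide field_simps)
  then have "root k ((real k / 50) ^ k) \<le> root k (fact (k - 1))"
    using assms by (intro real_root_le_mono) auto
  then show ?thesis using assms by (simp add: real_root_power_cancel)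
qed

theorem lemma3p9:
  shows "\<exists>k0::nat. \<forall>k::nat. \<forall>N::nat. \<forall>\<delta>::real. \<forall>x::real.
    k \<ge> k0 \<longrightarrow> N \<ge> 1 \<longrightarrow> real N \<ge> real k * 4 ^ k \<longrightarrow>
    0 < \<delta> \<longrightarrow> \<delta> \<le> (1 / 2 ^ k) / 20 \<longrightarrow>
    4 ^ (k ^ 2) \<le> x \<longrightarrow> x \<le> real N ^ k / fact (k - 1) \<longrightarrow>
    real (card (S1 N \<delta> x)) \<ge> root k x / 200"
proof (intro exI[of _ 20] allI impI)
  fix k N :: nat and \<delta> x :: real
  assume k20: "20 \<le> k" and N1: "1 \<le> N" and "real k * 4 ^ k \<le> real N" and "0 < \<delta>"
    and \<delta>le: "\<delta> \<le> 1 / 2 ^ k / 20" and x1: "4 ^ (k ^ 2) \<le> x" and x2: "x \<le> real N ^ k / fact (k - 1)"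
  have k0: "k > 0" using k20 by simp
  have xpos: "x > 0" using x1 by (smt (verit) zero_less_power)
  have fpos: "fact (k - 1) > (0::real)" by simp
  define C where "C = fact (k - 1) * x"
  have Cpos: "C > 0" unfolding C_def using xpos by simp
  have xC: "x \<le> C" unfolding C_def using xpos fact_ge_1[of "k-1", where 'a=real]
    by (simp add: mult_le_cancel_right1)
  have CN: "C \<le> real N ^ k" unfolding C_def using x2 fpos by (simp add: field_simps)
  define y where "y = root k C"
  have ypos: "y > 0" unfolding y_def using Cpos k0 by simp
  have yk: "y ^ k = C" unfolding y_def using Cpos k0 by simp
  have yroot: "y = root k (fact (k - 1)) * root k x" unfolding y_def C_def by (simp add: real_root_mult)
  have y4: "4 ^ k \<le> y"
  proof -
    have "((4::real) ^ k) ^ k = 4 ^ (k ^ 2)" by (simp add: power_mult[symmetric] power2_eq_square)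
    then have "((4::real) ^ k) ^ k \<le> y ^ k" using x1 xC yk by simp
    then show ?thesis using ypos k0 by (metis power_mono_iff less_imp_le zero_le_power zero_le_numeral)
  qed
  have yN: "y \<le> real N"
    using CN yk ypos k0 by (metis power_mono_iff less_imp_le of_nat_0_le_iff)
  have p2: "100 * (real k + 1) \<le> 2 ^ k" using pow2_big k20 by simp
  have y4': "(2::real) ^ k * 2 ^ k \<le> y" using y4 by (simp add: power_mult_distrib[symmetric])
  define Q where "Q = (\<lambda>n. \<Prod>i<k. real (n + i))"
  define g where "g = (\<lambda>n. C / Q n)"
  have atm: "{..k - 1} = {..<k}" using k0 by auto
  have gdiff: "fdiff (k - 1) (\<lambda>j. x / real j) n = g n" if "n \<ge> 1" for n
    using fdiff_closed[OF that, of "k - 1" x] unfolding g_def Q_def C_def atm by simp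
  define a where "a = nat \<lceil>y / 2\<rceil>"
  define b where "b = nat \<lfloor>y\<rfloor> - k"
  define R where "R = {a..b}"
  have t1: "(1::real) \<le> 2 ^ k" by simp
  have t2: "(2::real) ^ k \<le> 2 ^ k * 2 ^ k" using t1 by (simp add: mult_le_cancel_left1)
  have kley: "real k \<le> y"
  proof -
    have "real k \<le> 100 * (real k + 1)" by simp
    also have "\<dots> \<le> 2 ^ k" by (rule p2)
    also have "\<dots> \<le> 2 ^ k * 2 ^ k" by (rule t2)
    also have "\<dots> \<le> y" by (rule y4')
    finally show ?thesis .
  qed
  have kfl: "k \<le> nat \<lfloor>y\<rfloor>" using kley by (simp add: le_nat_floor)
  have bval: "real b = of_int \<lfloor>y\<rfloor> - real k"
    unfolding b_def using kfl ypos by (simp add: of_nat_diff)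
  have Rprops: "1 \<le> n \<and> y / 2 \<le> real n \<and> real n + real k \<le> y" if "n \<in> R" for n
  proof -
    have "y / 2 \<le> real a" unfolding a_def by linarith
    moreover have "real b + real k \<le> y" using bval by linarith
    ultimately show ?thesis using that ypos unfolding R_def by auto
  qed
  have gbounds: "1 \<le> g n \<and> g n \<le> 2 ^ k" if "n \<in> R" for n
  proof -
    have n: "1 \<le> n" "y / 2 \<le> real n" "real n + real k \<le> y" using Rprops[OF that] by auto
    have Qlo: "real n ^ k \<le> Q n"
      unfolding Q_def using prod_mono[of "{..<k}" "\<lambda>_. real n" "\<lambda>i. real (n + i)"] by simp
    have Qhi: "Q n \<le> real (n + k) ^ k"
      unfolding Q_def using prod_mono[of "{..<k}" "\<lambda>i. real (n + i)" "\<lambda>_. real (n + k)"] by simp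
    have Qpos: "Q n > 0" unfolding Q_def using n by (auto intro!: prod_pos)
    have "Q n \<le> y ^ k" using Qhi power_mono[OF n(3), of k] by simp
    then have "1 \<le> g n" unfolding g_def using Qpos yk by simp
    moreover have "(y / 2) ^ k \<le> Q n" using Qlo power_mono[OF n(2), of k] ypos by simp
    then have "C / 2 ^ k \<le> Q n" using yk by (simp add: power_divide)
    then have "g n \<le> 2 ^ k" unfolding g_def using Qpos by (simp add: field_simps)
    ultimately show ?thesis by simp
  qed
  define U where "U = {n \<in> R. dist_nearest_int (g n) \<ge> 1 / 20}"
  define B where "B = {n \<in> R. dist_nearest_int (g n) < 1 / 20}"
  have cardR: "real (card R) \<ge> y / 2 - real k - 1"
  proof -
    have "real (card R) = real (Suc b - a)" unfolding R_def by simp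
    moreover have "real a \<le> y / 2 + 1" unfolding a_def using ypos by linarith
    moreover have "real b \<ge> y - 1 - real k" using bval by linarith
    ultimately show ?thesis by linarith
  qed
  have RUB: "card R \<le> card U + card B"
  proof -
    have "R = U \<union> B" unfolding U_def B_def by auto
    then show ?thesis using card_Un_le by metis
  qed
  define F where "F = (\<lambda>m::nat. {n \<in> B. round (g n) = int m})"
  have Bfin: "finite B" unfolding B_def R_def by simp
  have Bsub: "B \<subseteq> (\<Union>m\<in>{1..2^k}. F m)"
  proof
    fix n assume nB: "n \<in> B"
    then have nR: "n \<in> R" unfolding B_def by simp
    have r1: "1 \<le> round (g n)" using gbounds[OF nR] round_mono[of 1 "g n"] by simp
    have "round (g n) \<le> round ((2::real) ^ k)" using gbounds[OF nR] round_mono by blast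
    also have "round ((2::real) ^ k) = 2 ^ k"
      by (metis of_int_numeral of_int_power round_of_int)
    finally have r2: "round (g n) \<le> 2 ^ k" .
    define m where "m = nat (round (g n))"
    have "int m = round (g n)" unfolding m_def using r1 by simp
    moreover have "m \<in> {1..2^k}" unfolding m_def using r1 r2 by (simp add: nat_le_iff)
    ultimately show "n \<in> (\<Union>m\<in>{1..2^k}. F m)" unfolding F_def using nB
      by (intro UN_I[of m]) auto
  qed
  have Fcard: "real (card (F m)) \<le> y / (5 * real k * real m) + 1" if m1: "m \<ge> 1" for m
  proof (rule card_spread)
    show "finite (F m)" unfolding F_def using Bfin by simp
    show "0 < y / (5 * real k * real m)" using ypos k0 m1 by simp
  next
    fix u v assume uF: "u \<in> F m" and vF: "v \<in> F m" and uv: "u < v"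
    have uR: "u \<in> R" and vR: "v \<in> R" using uF vF unfolding F_def B_def by auto
    have du: "\<bar>g u - real m\<bar> < 1 / 20" using uF unfolding F_def B_def dist_nearest_int_def by auto
    have dv: "\<bar>g v - real m\<bar> < 1 / 20" using vF unfolding F_def B_def dist_nearest_int_def by auto
    have u: "1 \<le> u" "real u + real k \<le> y" using Rprops[OF uR] by auto
    have v1: "1 \<le> v" using Rprops[OF vR] by auto
    define c where "c = 1 + real k * (real (v - u) / real (u + k))"
    have c1: "c \<ge> 1" unfolding c_def by simp
    have Qr: "Q u * c \<le> Q v" unfolding Q_def c_def by (rule Q_ratio[OF uv])
    have Qu: "Q u > 0" unfolding Q_def using u by (auto intro!: prod_pos)
    have "g v * c = C * c / Q v" unfolding g_def by simp
    also have "\<dots> \<le> C * c / (Q u * c)"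
    proof -
      have p: "Q u * c > 0" using Qu c1 by simp
      then have "Q v > 0" using Qr by linarith
      then show ?thesis using Qr p Cpos c1 by (intro divide_left_mono) auto
    qed
    also have "\<dots> = g u" unfolding g_def using c1 by simp
    finally have gc: "g v * c \<le> g u" .
    have "g v * (real k * (real (v - u) / real (u + k))) \<le> g u - g v"
      using gc unfolding c_def by (simp add: algebra_simps)
    also have "\<dots> < 1 / 10" using du dv by linarith
    finally have A: "g v * (real k * (real (v - u) / real (u + k))) < 1 / 10" .
    have gv: "real m / 2 \<le> g v" using dv m1 by linarith
    have B1: "real k * (real (v - u) / y) \<le> real k * (real (v - u) / real (u + k))"
      using u ypos by (intro mult_left_mono divide_left_mono) auto
    have "real m / 2 * (real k * (real (v - u) / y)) \<le> g v * (real k * (real (v - u) / real (u + k)))"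
    proof (rule mult_mono[OF gv B1])
      have "(0::real) \<le> real m / 2" by simp
      then show "0 \<le> g v" using gv by (rule order_trans)
      show "0 \<le> real k * (real (v - u) / y)" using ypos by simp
    qed
    with A have "real m / 2 * (real k * (real (v - u) / y)) < 1 / 10" by linarith
    then show "real (v - u) < y / (5 * real k * real m)"
      using ypos k0 m1 by (simp add: field_simps)
  qed
  have harm: "(\<Sum>m=1..(2::nat)^k. 1 / real m) \<le> 1 + real k"
  proof -
    have "(\<Sum>m=1..(2::nat)^k. 1 / real m) \<le> 1 + ln (real ((2::nat) ^ k))"
      by (rule harm_le_ln) simp
    also have "ln (real ((2::nat) ^ k)) = real k * ln 2" by (simp add: ln_realpow)
    also have "\<dots> \<le> real k" using ln_2_less_1 by (simp add: mult_left_le)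
    finally show ?thesis by simp
  qed
  have cardB: "real (card B) \<le> y * (1 + real k) / (5 * real k) + 2 ^ k"
  proof -
    have "card B \<le> card (\<Union>m\<in>{1..2^k}. F m)"
      using Bsub by (intro card_mono) (auto simp: F_def Bfin)
    also have "\<dots> \<le> (\<Sum>m\<in>{1..2^k}. card (F m))" by (rule card_UN_le) simp
    finally have "real (card B) \<le> (\<Sum>m\<in>{1..2^k}. real (card (F m)))"
      by (metis of_nat_le_iff of_nat_sum)
    also have "\<dots> \<le> (\<Sum>m\<in>{1..(2::nat)^k}. y / (5 * real k) * (1 / real m) + 1)"
      using Fcard by (intro sum_mono) auto
    also have "\<dots> = y / (5 * real k) * (\<Sum>m=1..(2::nat)^k. 1 / real m) + 2 ^ k"
      by (simp add: sum.distrib sum_distrib_left)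
    also have "\<dots> \<le> y / (5 * real k) * (1 + real k) + 2 ^ k"
      using harm ypos k0 by (intro add_right_mono mult_left_mono) auto
    finally show ?thesis by simp
  qed
  have S1fin: "finite (S1 N \<delta> x)" unfolding S1_def by simp
  have witness: "\<exists>j\<in>S1 N \<delta> x. n \<le> j \<and> j \<le> n + (k - 1)" if nU: "n \<in> U" for n
  proof (rule ccontr)
    assume nw: "\<not> ?thesis"
    have nR: "n \<in> R" using nU unfolding U_def by simp
    have n: "1 \<le> n" "real n + real k \<le> y" using Rprops[OF nR] by auto
    define r where "r = (\<lambda>j::nat. real_of_int (round (x / real j)))"
    define e where "e = (\<lambda>j::nat. x / real j - r j)"
    have small: "\<bar>e j\<bar> \<le> \<delta>" if j: "n \<le> j" "j \<le> n + (k - 1)" for j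
    proof -
      have "real j \<le> real n + real k - 1" using j k0 by linarith
      then have "real j \<le> real N" using n yN by linarith
      then have "j \<in> {1..N}" using j n by simp
      then have "dist_nearest_int (x / real j) < \<delta>" using nw j unfolding S1_def by auto
      then show ?thesis unfolding e_def r_def dist_nearest_int_def by simp
    qed
    have split: "fdiff (k - 1) (\<lambda>j. x / real j) n = fdiff (k - 1) r n + fdiff (k - 1) e n"
    proof -
      have "(\<lambda>j. x / real j) = (\<lambda>j. r j + e j)" unfolding e_def by auto
      then show ?thesis using fdiff_add[of "k - 1" r e n] by simp
    qed
    have eb: "\<bar>fdiff (k - 1) e n\<bar> \<le> 2 ^ (k - 1) * \<delta>"
      by (rule fdiff_bound) (use small in auto)
    have "2 ^ (k - 1) * \<delta> \<le> 2 ^ (k - 1) * (1 / 2 ^ k / 20)"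
      using \<delta>le by (intro mult_left_mono) auto
    also have "\<dots> = 1 / 40"
    proof -
      have eq: "(2::real) ^ k = 2 * 2 ^ (k - 1)" using k0 by (cases k) simp_all
      have gen: "\<And>p::real. p > 0 \<Longrightarrow> p * (1 / (2 * p) / 20) = 1 / 40" by (simp add: field_simps)
      show ?thesis unfolding eq by (rule gen) simp
    qed
    finally have eb2: "\<bar>fdiff (k - 1) e n\<bar> \<le> 1 / 40" using eb by linarith
    have rI: "fdiff (k - 1) r n \<in> \<int>" by (rule fdiff_Ints) (simp add: r_def)
    have "dist_nearest_int (g n) \<le> \<bar>g n - fdiff (k - 1) r n\<bar>" by (rule dni_le[OF rI])
    also have "\<dots> = \<bar>fdiff (k - 1) e n\<bar>" using split gdiff[OF n(1)] by simp
    finally have "dist_nearest_int (g n) < 1 / 20" using eb2 by linarith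
    then show False using nU unfolding U_def by simp
  qed
  have Usub: "U \<subseteq> (\<Union>j\<in>S1 N \<delta> x. {j + 1 - k..j})"
  proof
    fix n assume "n \<in> U"
    then obtain j where "j \<in> S1 N \<delta> x" "n \<le> j" "j \<le> n + (k - 1)" using witness by blast
    then show "n \<in> (\<Union>j\<in>S1 N \<delta> x. {j + 1 - k..j})" using k0 by (intro UN_I[of j]) auto
  qed
  have cardU: "card U \<le> card (S1 N \<delta> x) * k"
  proof -
    have "card U \<le> card (\<Union>j\<in>S1 N \<delta> x. {j + 1 - k..j})"
      using Usub S1fin by (intro card_mono) auto
    also have "\<dots> \<le> (\<Sum>j\<in>S1 N \<delta> x. card {j + 1 - k..j})" by (rule card_UN_le[OF S1fin])
    also have "\<dots> \<le> (\<Sum>j\<in>S1 N \<delta> x. k)" by (intro sum_mono) auto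
    finally show ?thesis by simp
  qed
  have fin: "real (card U) \<ge> y / 4"
  proof -
    have "real (card R) \<le> real (card U) + real (card B)" using RUB by linarith
    then have cu: "real (card U) \<ge> y / 2 - real k - 1 - (y * (1 + real k) / (5 * real k) + 2 ^ k)"
      using cardR cardB by linarith
    have "(1 + real k) / (5 * real k) \<le> 21 / 100" using k20 by (simp add: field_simps)
    then have h1: "y * (1 + real k) / (5 * real k) \<le> y * (21 / 100)"
      using ypos by (metis mult_left_mono less_imp_le times_divide_eq_right)
    have "100 * (real k + 1) * 2 ^ k \<le> 2 ^ k * 2 ^ k" using p2 by simp
    then have h2: "100 * (real k + 1) * 2 ^ k \<le> y" using y4' by linarith
    have h3': "(real k + 1) * 1 \<le> (real k + 1) * 2 ^ k" by (intro mult_left_mono) auto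
    then have h3: "real k + 1 \<le> (real k + 1) * 2 ^ k" by simp
    have h4: "2 ^ k \<le> (real k + 1) * (2::real) ^ k" by simp
    have gen: "yy / 4 \<le> u" if "yy / 2 - kk - 1 - (A + P) \<le> u" "A \<le> yy * (21 / 100)"
       "100 * T \<le> yy" "kk + 1 \<le> T" "P \<le> T" "0 \<le> yy" for u yy kk A P T :: real
      using that by linarith
    show ?thesis
      by (rule gen[OF cu h1 _ h3 h4]) (use h2 ypos in \<open>simp_all add: algebra_simps\<close>)
  qed
  have cS: "y / (4 * real k) \<le> real (card (S1 N \<delta> x))"
  proof -
    have "y / 4 \<le> real (card (S1 N \<delta> x)) * real k" using fin cardU
      by (metis of_nat_le_iff of_nat_mult order_trans)
    then show ?thesis using k0 by (simp add: field_simps)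
  qed
  have rho: "real k / 50 \<le> root k (fact (k - 1))" using fact_root k0 by simp
  have rx: "root k x \<ge> 0" using xpos by (simp add: real_root_ge_zero)
  have "root k x / 200 \<le> y / (4 * real k)"
  proof -
    have "real k / 50 * root k x \<le> y" unfolding yroot using rho rx by (intro mult_right_mono) auto
    then show ?thesis using k0 by (simp add: field_simps)
  qed
  then show "root k x / 200 \<le> real (card (S1 N \<delta> x))" using cS by linarith
qed

end
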